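(* Let $n\ge1$ and let $A=\Lambda^*(\widetilde{M}_{\mathbb{C}})$ with the $\mathbb{Q}$-grading and $\mathbb{T}$-action described in the context. For every integer $d>2$, \[HH^2(A,A)^{2-d,\mathbb{T}}=\begin{cases}\mathbb{C}\cdot W & d=n+2,\\ 0 & \text{otherwise},\end{cases}\] where $W=z_1z_2\cdots z_{n+2}\in\mathrm{Sym}^{n+2}(\widetilde{M}_{\mathbb{C}}^\vee)$.
   Context: $\widetilde{M}=\mathbb{Z}\langle e_1,\dots,e_{n+2}\rangle$, $M=\widetilde{M}/\langle e_1+\dots+e_{n+2}\rangle$, $\widetilde{M}_{\mathbb{C}}=\widetilde{M}\otimes\mathbb{C}$, with dual basis $z_1,\dots,z_{n+2}$ of $\widetilde{M}_{\mathbb{C}}^\vee$. $A=\Lambda^*(\widetilde{M}_{\mathbb{C}})$ is graded so that $\Lambda^j$ sits in degree $\frac{n}{n+2}j$. The torus $\mathbb{T}=\mathrm{Hom}(M,\mathbb{C}^* )$ acts on $\widetilde{M}_{\mathbb{C}}$ by $\alpha\cdot e_j=\alpha(e_j)e_j$ and dually on $\widetilde{M}_{\mathbb{C}}^\vee$. $HH^{s+t}(A,A)^{t,\mathbb{T}}$ denotes the $\mathbb{T}$-equivariant Hochschild cohomology of $A$ with its bigrading ($s$ the number of inputs of a Hochschild cochain, $t$ the internal degree shift, so that a deformation by a higher product $\mu^d$ lies in $HH^2(A,A)^{2-d}$); by the Hochschild–Kostant–Rosenberg isomorphism, \[HH^{s+t}(A,A)^{t,\mathbb{T}}\cong\bigoplus_{\frac{2}{n+2}s+\frac{n}{n+2}j=s+t}\big(\mathrm{Sym}^s(\widetilde{M}_{\mathbb{C}}^\vee)\otimes\Lambda^j(\widetilde{M}_{\mathbb{C}})\big)^{\mathbb{T}}.\]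 *)

theory Defs
  imports Complex_Main
begin

(* Indices 0..n+1 stand for 1..n+2.  A basis vector of
   Sym^s(M~_C^dual) (x) Lambda^j(M~_C) is a pair (a, J): the monomial
   z^a = prod z_i^(a i) (a supported on {..<n+2}, total degree s) tensored
   with the wedge e_J of the basis vectors indexed by J (|J| = j). *)

definition hkr_basis :: "nat \<Rightarrow> nat \<Rightarrow> nat \<Rightarrow> ((nat \<Rightarrow> nat) \<times> nat set) set" where
  "hkr_basis n s j = {(a, J). (\<forall>i\<ge>n+2. a i = 0) \<and> J \<subseteq> {..<n+2}
      \<and> sum a {..<n+2} = s \<and> card J = j}"

(* The torus T = Hom(M, Cstar): characters alpha of M~ (alpha_i = alpha(e_i))
   which are trivial on e_1 + ... + e_{n+2}. *)
definition torus :: "nat \<Rightarrow> (nat \<Rightarrow> complex) set" where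
  "torus n = {\<alpha>. (\<forall>i<n+2. \<alpha> i \<noteq> 0) \<and> (\<Prod>i<n+2. \<alpha> i) = 1}"

(* alpha . e_j = alpha_j e_j, dually alpha . z_i = alpha_i^{-1} z_i,
   so alpha acts on z^a (x) e_J by this scalar. *)
definition weight :: "nat \<Rightarrow> (nat \<Rightarrow> complex) \<Rightarrow> (nat \<Rightarrow> nat) \<times> nat set \<Rightarrow> complex" where
  "weight n \<alpha> b = (\<Prod>i<n+2. inverse (\<alpha> i) ^ (fst b i)) * (\<Prod>i\<in>snd b. \<alpha> i)"

(* HH^{k}(A,A)^{t,T} (k = s+t the total degree, t the internal Q-degree),
   modelled through the HKR isomorphism of the context:
   the direct sum over j of (Sym^s(M~_C^dual) (x) Lambda^j(M~_C))^T where
   s = k - t and (2/(n+2)) s + (n/(n+2)) j = k. *)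
definition HH_T :: "nat \<Rightarrow> int \<Rightarrow> rat \<Rightarrow> ((nat \<Rightarrow> nat) \<times> nat set \<Rightarrow> complex) set" where
  "HH_T n k t = {c.
     (\<forall>b. c b \<noteq> 0 \<longrightarrow> (\<exists>s j. b \<in> hkr_basis n s j \<and> of_nat s = of_int k - t
         \<and> (2 * of_nat s + of_nat n * of_nat j) / (of_nat n + 2) = (of_int k :: rat)))
     \<and> (\<forall>\<alpha>\<in>torus n. \<forall>b. weight n \<alpha> b * c b = c b)}"

definition W :: "nat \<Rightarrow> (nat \<Rightarrow> nat) \<times> nat set \<Rightarrow> complex" where
  "W n b = (if b = ((\<lambda>i. if i < n+2 then 1 else 0), {}) then 1 else 0)"

end

theory Submission imports Defs begin

definition ex :: "(nat \<Rightarrow> nat) \<times> nat set \<Rightarrow> nat \<Rightarrow> int" where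
  "ex b i = (if i \<in> snd b then 1 else 0) - int (fst b i)"

lemma weight_powi:
  assumes "snd b \<subseteq> {..<n+2}" and "\<forall>i<n+2. \<alpha> i \<noteq> 0"
  shows "weight n \<alpha> b = (\<Prod>i<n+2. \<alpha> i powi ex b i)"
proof -
  have 1: "(\<Prod>i\<in>snd b. \<alpha> i) = (\<Prod>i<n+2. \<alpha> i powi (if i \<in> snd b then 1 else 0))"
  proof -
    have "(\<Prod>i<n+2. \<alpha> i powi (if i \<in> snd b then 1 else 0)) = (\<Prod>i<n+2. if i \<in> snd b then \<alpha> i else 1)"
      by (intro prod.cong refl) simp
    also have "\<dots> = prod \<alpha> ({..<n+2} \<inter> {i. i \<in> snd b})"
      by (simp only: prod.If_cases[OF finite_lessThan] prod.neutral_const mult_1_right)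
    also have "{..<n+2} \<inter> {i. i \<in> snd b} = snd b" using assms(1) by auto
    finally show ?thesis by simp
  qed
  have 2: "(\<Prod>i<n+2. inverse (\<alpha> i) ^ (fst b i)) = (\<Prod>i<n+2. \<alpha> i powi (- int (fst b i)))"
    by (intro prod.cong refl) (simp add: power_int_minus power_inverse)
  show ?thesis unfolding weight_def 1 2 ex_def prod.distrib[symmetric]
    using assms(2)
  proof (intro prod.cong refl)
    fix x assume x: "x \<in> {..<n+2}"
    have "\<alpha> x \<noteq> 0" using x assms(2) by auto
    then have "\<alpha> x powi (- int (fst b x) + (if x \<in> snd b then 1 else 0)) = \<alpha> x powi (- int (fst b x)) * \<alpha> x powi (if x \<in> snd b then 1 else 0)"
      by (intro power_int_add) simp
    then show "\<alpha> x powi (- int (fst b x)) * \<alpha> x powi (if x \<in> snd b then 1 else 0) = \<alpha> x powi ((if x \<in> snd b then 1 else 0) - int (fst b x))"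
      by (metis add.commute uminus_add_conv_diff)
  qed
qed

lemma two_powi: "(2::complex) powi m = 1 \<Longrightarrow> m = 0"
proof (cases "m \<ge> 0")
  case True
  assume h: "(2::complex) powi m = 1"
  then have "(2::complex) ^ nat m = 1" using True by (simp add: power_int_def)
  then have "(2::real) ^ nat m = 1" by (metis of_real_eq_1_iff of_real_numeral of_real_power)
  then show ?thesis using True power_strict_increasing_iff[of "2::real" 0 "nat m"] by simp
next
  case False
  assume h: "(2::complex) powi m = 1"
  then have "(2::complex) ^ nat (-m) = 1" using False
    by (simp add: power_int_def field_simps)
  then have "(2::real) ^ nat (-m) = 1" by (metis of_real_eq_1_iff of_real_numeral of_real_power)
  then show ?thesis using False power_strict_increasing_iff[of "2::real" 0 "nat (-m)"] by simp
qed

lemma ex_const: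
  assumes "snd b \<subseteq> {..<n+2}" and inv: "\<forall>\<alpha>\<in>torus n. weight n \<alpha> b = 1"
    and i: "i < n+2" and k: "k < n+2" and ik: "i \<noteq> k"
  shows "ex b i = ex b k"
proof -
  define \<alpha> :: "nat \<Rightarrow> complex" where "\<alpha> = (\<lambda>m. if m = i then 2 else if m = k then 1/2 else 1)"
  have nz: "\<forall>m<n+2. \<alpha> m \<noteq> 0" by (simp add: \<alpha>_def)
  have P: "(\<Prod>m<n+2. f m) = f i * f k" if "\<forall>m. m \<noteq> i \<and> m \<noteq> k \<longrightarrow> f m = 1" for f :: "nat \<Rightarrow> complex"
  proof -
    have "(\<Prod>m<n+2. f m) = (\<Prod>m\<in>{i,k}. f m)"
      by (rule prod.mono_neutral_right) (use i k ik that in auto)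
    then show ?thesis using ik by simp
  qed
  have "(\<Prod>m<n+2. \<alpha> m) = 1" by (subst P) (use ik in \<open>auto simp: \<alpha>_def\<close>)
  then have "\<alpha> \<in> torus n" using nz by (simp add: torus_def)
  then have "1 = (\<Prod>m<n+2. \<alpha> m powi ex b m)" using inv weight_powi[OF assms(1) nz] by simp
  also have "\<dots> = 2 powi ex b i * (1/2) powi ex b k" by (subst P) (use ik in \<open>auto simp: \<alpha>_def\<close>)
  also have "\<dots> = 2 powi ex b i / 2 powi ex b k"
    by (simp add: power_int_divide_distrib)
  also have "\<dots> = 2 powi (ex b i - ex b k)"
    by (intro power_int_diff[symmetric]) simp
  finally have "2 powi (ex b i - ex b k) = (1::complex)" by simp
  from two_powi[OF this] show ?thesis by simp
qed

definition b0 :: "nat \<Rightarrow> (nat \<Rightarrow> nat) \<times> nat set" where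
  "b0 n = ((\<lambda>i. if i < n+2 then 1 else 0), {})"

lemma key:
  assumes n: "n \<ge> 1" and d: "d > 2" and c: "c \<in> HH_T n 2 (of_int (2 - d))" and cb: "c b \<noteq> 0"
  shows "d = int n + 2 \<and> b = b0 n"
proof -
  obtain s j where bs: "b \<in> hkr_basis n s j" and sd: "of_nat s = of_int 2 - (of_int (2 - d) :: rat)"
    and eq: "(2 * of_nat s + of_nat n * of_nat j) / (of_nat n + 2) = (of_int 2 :: rat)"
    using c cb unfolding HH_T_def by blast
  obtain a J where b: "b = (a, J)" by fastforce
  have a0: "\<forall>i\<ge>n+2. a i = 0" and J: "J \<subseteq> {..<n+2}" and as: "sum a {..<n+2} = s" and cJ: "card J = j"
    using bs b by (auto simp: hkr_basis_def)
  have "rat_of_int (int s) = rat_of_int d" using sd by simp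
  then have sd': "int s = d" by (simp only: of_int_eq_iff)
  have "2 * rat_of_nat s + rat_of_nat n * rat_of_nat j = 2 * (rat_of_nat n + 2)"
    using eq by (simp add: field_simps)
  then have "rat_of_nat (2 * s + n * j) = rat_of_nat (2 * n + 4)" by simp
  then have eq': "2 * s + n * j = 2 * n + 4" by (simp only: of_nat_eq_iff)
  have w1: "\<forall>\<alpha>\<in>torus n. weight n \<alpha> b = 1"
  proof
    fix \<alpha> assume "\<alpha> \<in> torus n"
    then have "weight n \<alpha> b * c b = c b" using c unfolding HH_T_def by blast
    then show "weight n \<alpha> b = 1" using cb by simp
  qed
  define e where "e = ex b 0"
  have exc: "ex b i = e" if "i < n+2" for i
    using ex_const[of b n i 0] that J b w1 by (cases "i = 0") (auto simp: e_def)
  have "(\<Sum>i<n+2. ex b i) = (\<Sum>i<n+2. (if i \<in> J then 1 else 0)) - (\<Sum>i<n+2. int (a i))"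
    by (simp add: ex_def b sum_subtractf)
  also have "(\<Sum>i<n+2. (if i \<in> J then 1 else (0::int))) = int (card ({..<n+2} \<inter> {i. i \<in> J}))"
    by (simp only: sum.If_cases[OF finite_lessThan] sum.neutral_const add_0_right) simp
  also have "{..<n+2} \<inter> {i. i \<in> J} = J" using J by auto
  also have "(\<Sum>i<n+2. int (a i)) = int s" using as by (simp flip: of_nat_sum)
  finally have "(\<Sum>i<n+2. ex b i) = int j - int s" using cJ by simp
  moreover have "(\<Sum>i<n+2. ex b i) = int (n+2) * e" using exc by simp
  ultimately have E: "int j - int s = int (n+2) * e" by simp
  have eq'': "2 * int s + int n * int j = 2 * int n + 4" using arg_cong[OF eq', of int] by simp
  have S: "int s = 2 - int n * e"
  proof -
    have "(int n + 2) * (int s + int n * e - 2) = 0"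
      using E eq'' by (simp add: algebra_simps)
    then show ?thesis by simp
  qed
  have "int n * e < 0" using S sd' d by simp
  then have "e < 0" using n by (simp add: mult_less_0_iff)
  moreover have "int j = 2 + 2 * e" using E S by (simp add: algebra_simps)
  ultimately have e: "e = -1" and j0: "j = 0" by auto
  have "J = {}" using cJ j0 J finite_subset[OF J] by auto
  moreover have "a = (\<lambda>i. if i < n+2 then 1 else 0)"
  proof
    fix i show "a i = (if i < n+2 then 1 else 0)"
      using exc[of i] e a0 \<open>J = {}\<close> by (cases "i < n+2") (auto simp: ex_def b)
  qed
  ultimately have "b = b0 n" using b by (simp add: b0_def)
  moreover have "d = int n + 2" using S e sd' by simp
  ultimately show ?thesis by simp
qed

lemma W_b0: "W n b = (if b = b0 n then 1 else 0)"
  by (simp add: W_def b0_def)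

lemma b0_in: "(\<lambda>b. x * W n b) \<in> HH_T n 2 (of_int (2 - (int n + 2)))"
proof -
  have hb: "b0 n \<in> hkr_basis n (n+2) 0" by (simp add: hkr_basis_def b0_def)
  have wt: "weight n \<alpha> (b0 n) = 1" if "\<alpha> \<in> torus n" for \<alpha>
  proof -
    have "(\<Prod>i<n+2. inverse (\<alpha> i) ^ (fst (b0 n) i)) = (\<Prod>i<n+2. (inverse \<circ> \<alpha>) i)"
      by (intro prod.cong refl) (simp add: b0_def)
    also have "\<dots> = inverse (\<Prod>i<n+2. \<alpha> i)" by (rule prod_inversef)
    also have "\<dots> = 1" using that by (simp add: torus_def)
    finally show ?thesis by (simp add: weight_def b0_def)
  qed
  show ?thesis unfolding HH_T_def
  proof (intro CollectI conjI allI impI ballI)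
    fix b assume "x * W n b \<noteq> 0"
    then have "b = b0 n" by (simp add: W_b0 split: if_splits)
    then show "\<exists>s j. b \<in> hkr_basis n s j \<and> rat_of_nat s = of_int 2 - of_int (2 - (int n + 2)) \<and>
        (2 * rat_of_nat s + rat_of_nat n * rat_of_nat j) / (rat_of_nat n + 2) = of_int 2"
      using hb by (intro exI[of _ "n+2"] exI[of _ 0]) (simp add: field_simps)
  next
    fix \<alpha> b assume "\<alpha> \<in> torus n"
    then show "weight n \<alpha> b * (x * W n b) = x * W n b"
      using wt by (simp add: W_b0)
  qed
qed

theorem proposition5p32:
  fixes n :: nat and d :: int
  assumes "n \<ge> 1" and "d > 2"
  shows "HH_T n 2 (of_int (2 - d)) =
           (if d = int n + 2 then {c. \<exists>x::complex. c = (\<lambda>b. x * W n b)} else {\<lambda>b. 0})"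
proof (cases "d = int n + 2")
  case True
  have "HH_T n 2 (of_int (2 - d)) = {c. \<exists>x::complex. c = (\<lambda>b. x * W n b)}"
  proof (intro equalityI subsetI)
    fix c assume c: "c \<in> HH_T n 2 (of_int (2 - d))"
    have "c = (\<lambda>b. c (b0 n) * W n b)"
    proof
      fix b show "c b = c (b0 n) * W n b"
      proof (cases "b = b0 n")
        case False
        then have "c b = 0" using key[OF assms(1) assms(2) c, of b] by blast
        then show ?thesis using False by (simp add: W_b0)
      qed (simp add: W_b0)
    qed
    then show "c \<in> {c. \<exists>x::complex. c = (\<lambda>b. x * W n b)}" by blast
  next
    fix c assume "c \<in> {c. \<exists>x::complex. c = (\<lambda>b. x * W n b)}"
    then obtain x where "c = (\<lambda>b. x * W n b)" by blast
    then show "c \<in> HH_T n 2 (of_int (2 - d))" using b0_in[of x n] True by simp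
  qed
  then show ?thesis using True by simp
next
  case False
  show ?thesis
  proof (simp only: False if_False, intro equalityI subsetI)
    fix c assume c: "c \<in> HH_T n 2 (of_int (2 - d))"
    have "c = (\<lambda>b. 0)"
    proof
      fix b show "c b = 0" using key[OF assms c] False by blast
    qed
    then show "c \<in> {\<lambda>b. 0}" by simp
  next
    fix c assume "c \<in> {\<lambda>b::(nat \<Rightarrow> nat) \<times> nat set. 0::complex}"
    then show "c \<in> HH_T n 2 (of_int (2 - d))" by (simp add: HH_T_def)
  qed
qed

end
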